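(* Let $\mathfrak{g}$ be a finite-dimensional complex simple Lie algebra and $j\in I$. For every chamber weight $\gamma\in\Gamma$: - $\gamma\in\Gamma^j$ if and only if $\langle h_j,\gamma\rangle\le0$; - $\gamma\in\Gamma_j$ if and only if $\langle h_j,\gamma\rangle>0$.
   Context: $\mathfrak{g}$ has index set $I$, simple coroots $h_i$ and fundamental weights $\varpi_i$. $W$ is its Weyl group, with simple reflections $s_i$ and Bruhat order $<$. The chamber weights are $\Gamma=\{w\varpi_i:w\in W,i\in I\}$. Let $W_j^-=\{w\in W: s_jw<w\}$, set $\Gamma^j=\{w\varpi_i: w\in W_j^-, i\in I\}$, and set $\Gamma_j=\Gamma\setminus\Gamma^j$. *)

theory Defs
  imports Complex_Main
begin

text \<open>A finite-dimensional complex simple Lie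
algebra is encoded by its Cartan matrix A, with A i j = <h_i, alpha_j>.
Weights are written in the basis of fundamental weights: a weight is a function
lam :: 'i => int, lam = sum_i lam(i) varpi_i, so that <h_i, lam> = lam i.\<close>

definition cartan_simple :: "('i::finite \<Rightarrow> 'i \<Rightarrow> int) \<Rightarrow> bool" where
  "cartan_simple A \<longleftrightarrow>
     (\<forall>i. A i i = 2) \<and>
     (\<forall>i j. i \<noteq> j \<longrightarrow> A i j \<le> 0) \<and>
     (\<forall>i j. A i j = 0 \<longleftrightarrow> A j i = 0) \<and>
     (\<exists>d :: 'i \<Rightarrow> real. (\<forall>i. d i > 0) \<and>
        (\<forall>i j. d i * of_int (A i j) = d j * of_int (A j i)) \<and>
        (\<forall>x :: 'i \<Rightarrow> real. x \<noteq> (\<lambda>_. 0) \<longrightarrow>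
            (\<Sum>i\<in>UNIV. \<Sum>j\<in>UNIV. x i * d i * of_int (A i j) * x j) > 0)) \<and>
     (\<forall>S :: 'i set. S \<noteq> {} \<and> S \<noteq> UNIV \<longrightarrow> (\<exists>i\<in>S. \<exists>j. j \<notin> S \<and> A i j \<noteq> 0))"

definition fund_weight :: "'i \<Rightarrow> ('i \<Rightarrow> int)" where
  "fund_weight i = (\<lambda>k. if k = i then 1 else 0)"

definition simple_root :: "('i \<Rightarrow> 'i \<Rightarrow> int) \<Rightarrow> 'i \<Rightarrow> ('i \<Rightarrow> int)" where
  "simple_root A i = (\<lambda>k. A k i)"

definition sref :: "('i \<Rightarrow> 'i \<Rightarrow> int) \<Rightarrow> 'i \<Rightarrow> ('i \<Rightarrow> int) \<Rightarrow> ('i \<Rightarrow> int)" where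
  "sref A i lam = (\<lambda>k. lam k - lam i * A k i)"

definition word_elt :: "('i \<Rightarrow> 'i \<Rightarrow> int) \<Rightarrow> 'i list \<Rightarrow> (('i \<Rightarrow> int) \<Rightarrow> ('i \<Rightarrow> int))" where
  "word_elt A xs = foldr (\<lambda>i f. sref A i \<circ> f) xs id"

definition weyl :: "('i \<Rightarrow> 'i \<Rightarrow> int) \<Rightarrow> (('i \<Rightarrow> int) \<Rightarrow> ('i \<Rightarrow> int)) set" where
  "weyl A = range (word_elt A)"

definition weyl_length :: "('i \<Rightarrow> 'i \<Rightarrow> int) \<Rightarrow> (('i \<Rightarrow> int) \<Rightarrow> ('i \<Rightarrow> int)) \<Rightarrow> nat" where
  "weyl_length A w = (LEAST n. \<exists>xs. length xs = n \<and> word_elt A xs = w)"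

definition weyl_reflections :: "('i \<Rightarrow> 'i \<Rightarrow> int) \<Rightarrow> (('i \<Rightarrow> int) \<Rightarrow> ('i \<Rightarrow> int)) set" where
  "weyl_reflections A = {word_elt A xs \<circ> sref A i \<circ> word_elt A (rev xs) | xs i. True}"

definition bruhat_le :: "('i \<Rightarrow> 'i \<Rightarrow> int) \<Rightarrow> (('i \<Rightarrow> int) \<Rightarrow> ('i \<Rightarrow> int)) \<Rightarrow> (('i \<Rightarrow> int) \<Rightarrow> ('i \<Rightarrow> int)) \<Rightarrow> bool" where
  "bruhat_le A u w \<longleftrightarrow> u \<in> weyl A \<and>
     (\<lambda>x y. \<exists>t\<in>weyl_reflections A. y = t \<circ> x \<and> weyl_length A x < weyl_length A y)\<^sup>*\<^sup>* u w"

definition bruhat_less :: "('i \<Rightarrow> 'i \<Rightarrow> int) \<Rightarrow> (('i \<Rightarrow> int) \<Rightarrow> ('i \<Rightarrow> int)) \<Rightarrow> (('i \<Rightarrow> int) \<Rightarrow> ('i \<Rightarrow> int)) \<Rightarrow> bool" where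
  "bruhat_less A u w \<longleftrightarrow> bruhat_le A u w \<and> u \<noteq> w"

definition chamber_weights :: "('i \<Rightarrow> 'i \<Rightarrow> int) \<Rightarrow> ('i \<Rightarrow> int) set" where
  "chamber_weights A = {w (fund_weight i) | w i. w \<in> weyl A}"

definition weyl_minus :: "('i \<Rightarrow> 'i \<Rightarrow> int) \<Rightarrow> 'i \<Rightarrow> (('i \<Rightarrow> int) \<Rightarrow> ('i \<Rightarrow> int)) set" where
  "weyl_minus A j = {w \<in> weyl A. bruhat_less A (sref A j \<circ> w) w}"

definition Gamma_up :: "('i \<Rightarrow> 'i \<Rightarrow> int) \<Rightarrow> 'i \<Rightarrow> ('i \<Rightarrow> int) set" where
  "Gamma_up A j = {w (fund_weight i) | w i. w \<in> weyl_minus A j}"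

definition Gamma_low :: "('i \<Rightarrow> 'i \<Rightarrow> int) \<Rightarrow> 'i \<Rightarrow> ('i \<Rightarrow> int) set" where
  "Gamma_low A j = chamber_weights A - Gamma_up A j"

end

theory Submission
  imports Defs "HOL-Analysis.Analysis"
begin


lemma word_elt_Nil[simp]: "word_elt A [] = id" by (simp add: word_elt_def)
lemma word_elt_Cons[simp]: "word_elt A (i#xs) = sref A i \<circ> word_elt A xs" by (simp add: word_elt_def)
lemma word_elt_append: "word_elt A (xs@ys) = word_elt A xs \<circ> word_elt A ys"
  by (induction xs) (auto simp: word_elt_def)

lemma sref_app: "sref A i lam k = lam k - lam i * A k i" by (simp add: sref_def)

lemma sref_sref: "A i i = 2 \<Longrightarrow> sref A i (sref A i mu) = mu"
  by (rule ext) (simp add: sref_def algebra_simps)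

lemma word_rev_inv1: "(\<forall>i. A i i = 2) \<Longrightarrow> word_elt A (rev xs) (word_elt A xs mu) = mu"
  by (induction xs arbitrary: mu) (auto simp: word_elt_append sref_sref)

lemma word_rev_inv2: "(\<forall>i. A i i = 2) \<Longrightarrow> word_elt A xs (word_elt A (rev xs) mu) = mu"
  using word_rev_inv1[of A "rev xs" mu] by simp

lemma word_lin:
  fixes A :: "'i \<Rightarrow> 'i \<Rightarrow> int"
  shows "word_elt A xs (\<lambda>k. \<Sum>a\<in>S. c a * v a k) = (\<lambda>k. \<Sum>a\<in>S. c a * word_elt A xs (v a) k)"
proof (induction xs)
  case Nil then show ?case by simp
next
  case (Cons i xs)
  show ?case
    by (rule ext) (simp add: Cons sref_def sum_subtractf sum_distrib_right sum_distrib_left algebra_simps)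
qed

lemma fund_expand: "(mu::'i::finite \<Rightarrow> int) = (\<lambda>k. \<Sum>a\<in>UNIV. mu a * fund_weight a k)"
proof (rule ext)
  fix k
  have "(\<Sum>a\<in>UNIV. mu a * fund_weight a k) = (\<Sum>a\<in>UNIV. if k = a then mu a else 0)"
    by (rule sum.cong) (auto simp: fund_weight_def)
  then show "mu k = (\<Sum>a\<in>UNIV. mu a * fund_weight a k)" by simp
qed

lemma word_lin_fund:
  fixes A :: "'i::finite \<Rightarrow> 'i \<Rightarrow> int"
  shows "word_elt A xs mu k = (\<Sum>a\<in>UNIV. mu a * word_elt A xs (fund_weight a) k)"
proof -
  have "word_elt A xs mu = word_elt A xs (\<lambda>k. \<Sum>a\<in>UNIV. mu a * fund_weight a k)"
    by (subst fund_expand) simp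
  also have "\<dots> = (\<lambda>k. \<Sum>a\<in>UNIV. mu a * word_elt A xs (fund_weight a) k)" by (rule word_lin)
  finally show ?thesis by simp
qed




definition fire :: "('i \<Rightarrow> 'i \<Rightarrow> int) \<Rightarrow> ('i \<Rightarrow> int) \<Rightarrow> ('i \<Rightarrow> int) \<Rightarrow> bool" where
  "fire A mu nu \<longleftrightarrow> (\<exists>i. mu i < 0 \<and> nu = sref A i mu)"

fun alt :: "('i \<Rightarrow> 'i \<Rightarrow> int) \<Rightarrow> 'i \<Rightarrow> 'i \<Rightarrow> nat \<Rightarrow> ('i \<Rightarrow> int) \<Rightarrow> ('i \<Rightarrow> int)" where
  "alt A i k 0 mu = mu"
| "alt A i k (Suc n) mu = alt A k i n (sref A i mu)"

fun leg :: "('i \<Rightarrow> 'i \<Rightarrow> int) \<Rightarrow> 'i \<Rightarrow> 'i \<Rightarrow> nat \<Rightarrow> ('i \<Rightarrow> int) \<Rightarrow> bool" where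
  "leg A i k 0 mu = True"
| "leg A i k (Suc n) mu = (mu i < 0 \<and> leg A k i n (sref A i mu))"

lemma leg_fire: "leg A i k n mu \<Longrightarrow> (fire A)\<^sup>*\<^sup>* mu (alt A i k n mu)"
proof (induction n arbitrary: i k mu)
  case 0 then show ?case by simp
next
  case (Suc n)
  have "fire A mu (sref A i mu)" using Suc.prems by (auto simp: fire_def)
  moreover have "(fire A)\<^sup>*\<^sup>* (sref A i mu) (alt A k i n (sref A i mu))"
    using Suc by simp
  ultimately show ?case by (simp add: converse_rtranclp_into_rtranclp)
qed

lemma join_from_braid:
  assumes "leg A i k (Suc n) mu" "leg A k i (Suc n) mu" "alt A i k (Suc n) mu = alt A k i (Suc n) mu"
  shows "\<exists>u. (fire A)\<^sup>*\<^sup>* (sref A i mu) u \<and> (fire A)\<^sup>*\<^sup>* (sref A k mu) u"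
  using assms leg_fire[of A k i n "sref A i mu"] leg_fire[of A i k n "sref A k mu"] by auto

lemma rank2_cases:
  assumes "A i i = 2" "A k k = 2" "i \<noteq> k" "mu i < 0" "mu k < 0"
    and "(A k i = 0 \<and> A i k = 0) \<or> (A k i = -1 \<and> A i k = -1) \<or> (A k i = -1 \<and> A i k = -2)
       \<or> (A k i = -2 \<and> A i k = -1) \<or> (A k i = -1 \<and> A i k = -3) \<or> (A k i = -3 \<and> A i k = -1)"
  shows "\<exists>u. (fire A)\<^sup>*\<^sup>* (sref A i mu) u \<and> (fire A)\<^sup>*\<^sup>* (sref A k mu) u"
proof -
  from assms(6) consider "A k i = 0" "A i k = 0" | "A k i = -1" "A i k = -1" | "A k i = -1" "A i k = -2"
    | "A k i = -2" "A i k = -1" | "A k i = -1" "A i k = -3" | "A k i = -3" "A i k = -1" by blast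
  then show ?thesis
  proof cases
    case 1
    have "leg A i k 2 mu \<and> leg A k i 2 mu \<and> alt A i k 2 mu = alt A k i 2 mu"
      using assms 1 by (simp add: numeral_eq_Suc sref_def algebra_simps fun_eq_iff)
    then show ?thesis using join_from_braid[of A i k 1 mu] by (simp add: numeral_eq_Suc)
  next
    case 2
    have "leg A i k 3 mu \<and> leg A k i 3 mu \<and> alt A i k 3 mu = alt A k i 3 mu"
      using assms 2 by (simp add: numeral_eq_Suc sref_def algebra_simps fun_eq_iff)
    then show ?thesis using join_from_braid[of A i k 2 mu] by (simp add: numeral_eq_Suc)
  next
    case 3
    have "leg A i k 4 mu \<and> leg A k i 4 mu \<and> alt A i k 4 mu = alt A k i 4 mu"
      using assms 3 by (simp add: numeral_eq_Suc sref_def algebra_simps fun_eq_iff)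
    then show ?thesis using join_from_braid[of A i k 3 mu] by (simp add: numeral_eq_Suc)
  next
    case 4
    have "leg A i k 4 mu \<and> leg A k i 4 mu \<and> alt A i k 4 mu = alt A k i 4 mu"
      using assms 4 by (simp add: numeral_eq_Suc sref_def algebra_simps fun_eq_iff)
    then show ?thesis using join_from_braid[of A i k 3 mu] by (simp add: numeral_eq_Suc)
  next
    case 5
    have "leg A i k 6 mu \<and> leg A k i 6 mu \<and> alt A i k 6 mu = alt A k i 6 mu"
      using assms 5 by (simp add: numeral_eq_Suc sref_def algebra_simps fun_eq_iff)
    then show ?thesis using join_from_braid[of A i k 5 mu] by (simp add: numeral_eq_Suc)
  next
    case 6
    have "leg A i k 6 mu \<and> leg A k i 6 mu \<and> alt A i k 6 mu = alt A k i 6 mu"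
      using assms 6 by (simp add: numeral_eq_Suc sref_def algebra_simps fun_eq_iff)
    then show ?thesis using join_from_braid[of A i k 5 mu] by (simp add: numeral_eq_Suc)
  qed
qed

lemma int_pair_cases:
  fixes P Q :: int
  assumes "P \<le> 0" "Q \<le> 0" "P = 0 \<longleftrightarrow> Q = 0" "P * Q < 4"
  shows "(P = 0 \<and> Q = 0) \<or> (P = -1 \<and> Q = -1) \<or> (P = -1 \<and> Q = -2)
       \<or> (P = -2 \<and> Q = -1) \<or> (P = -1 \<and> Q = -3) \<or> (P = -3 \<and> Q = -1)"
proof (cases "P = 0")
  case True then show ?thesis using assms by simp
next
  case False
  then have "P \<le> -1" "Q \<le> -1" using assms by auto
  have "P \<ge> -3"
  proof (rule ccontr)
    assume "\<not> P \<ge> -3"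
    then have "P * Q \<ge> (-4) * Q" using \<open>Q \<le> -1\<close> by (intro mult_right_mono_neg) auto
    then show False using assms \<open>Q \<le> -1\<close> by linarith
  qed
  have "Q \<ge> -3"
  proof (rule ccontr)
    assume "\<not> Q \<ge> -3"
    then have "P * Q \<ge> P * (-4)" using \<open>P \<le> -1\<close> by (intro mult_left_mono_neg) auto
    then show False using assms \<open>P \<le> -1\<close> by linarith
  qed
  have "P \<in> {-3,-2,-1}" "Q \<in> {-3,-2,-1}" using \<open>P \<ge> -3\<close> \<open>Q \<ge> -3\<close> \<open>P \<le> -1\<close> \<open>Q \<le> -1\<close> by auto
  then show ?thesis using assms by auto
qed




definition qf :: "('i::finite \<Rightarrow> real) \<Rightarrow> ('i \<Rightarrow> 'i \<Rightarrow> int) \<Rightarrow> ('i \<Rightarrow> real) \<Rightarrow> real" where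
  "qf d A x = (\<Sum>i\<in>UNIV. \<Sum>j\<in>UNIV. x i * d i * of_int (A i j) * x j)"

lemma qf_scale: "qf d A (\<lambda>i. t * x i) = t^2 * qf d A x"
  by (simp add: qf_def sum_distrib_left power2_eq_square algebra_simps)

lemma coercive:
  fixes A :: "'i::finite \<Rightarrow> 'i \<Rightarrow> int"
  assumes pd: "\<forall>x :: 'i \<Rightarrow> real. x \<noteq> (\<lambda>_. 0) \<longrightarrow> qf d A x > 0"
  shows "\<exists>m>0. \<forall>x. qf d A x \<ge> m * (\<Sum>i\<in>UNIV. (x i)^2)"
proof -
  define f where "f = (\<lambda>y::real^'i. qf d A (\<lambda>i. y$i))"
  have cont: "continuous_on (sphere 0 1) f"
    unfolding f_def qf_def by (intro continuous_intros)
  have ne: "sphere (0::real^'i) 1 \<noteq> {}" by simp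
  obtain y0 where y0: "y0 \<in> sphere 0 1" "\<forall>y\<in>sphere 0 1. f y0 \<le> f y"
    using continuous_attains_inf[OF compact_sphere ne cont] by blast
  have "(\<lambda>i. y0$i) \<noteq> (\<lambda>_. 0)"
  proof
    assume "(\<lambda>i. y0$i) = (\<lambda>_. 0)"
    then have "y0 = 0" by (simp add: vec_eq_iff fun_eq_iff)
    then show False using y0(1) by simp
  qed
  then have m: "f y0 > 0" using pd unfolding f_def by blast
  show ?thesis
  proof (intro exI[of _ "f y0"] conjI allI m)
    fix x :: "'i \<Rightarrow> real"
    show "qf d A x \<ge> f y0 * (\<Sum>i\<in>UNIV. (x i)^2)"
    proof (cases "x = (\<lambda>_. 0)")
      case True then show ?thesis by (simp add: qf_def)
    next
      case False
      define v where "v = (\<chi> i. x i)"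
      have nv: "norm v ^ 2 = (\<Sum>i\<in>UNIV. (x i)^2)"
        unfolding v_def by (simp add: norm_vec_def L2_set_def sum_nonneg)
      have "v \<noteq> 0" using False unfolding v_def by (auto simp: vec_eq_iff fun_eq_iff)
      then have nz: "norm v > 0" by simp
      define u where "u = v /\<^sub>R norm v"
      have "u \<in> sphere 0 1" using nz unfolding u_def by simp
      then have "f y0 \<le> f u" using y0 by blast
      also have "f u = (1 / norm v)^2 * qf d A x"
      proof -
        have "(\<lambda>i. u$i) = (\<lambda>i. (1 / norm v) * x i)" by (simp add: u_def v_def fun_eq_iff divide_inverse mult.commute)
        then show ?thesis unfolding f_def using qf_scale[of d A "1 / norm v" x] by simp
      qed
      finally have "f y0 * norm v ^ 2 \<le> qf d A x"
        using nz by (simp add: field_simps power2_eq_square)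
      then show ?thesis using nv by simp
    qed
  qed
qed




lemma qf_update:
  fixes A :: "'i::finite \<Rightarrow> 'i \<Rightarrow> int"
  shows "qf d A (\<lambda>i. y i - (if i = x then t else 0)) =
    qf d A y - t * (\<Sum>j\<in>UNIV. d x * A x j * y j) - t * (\<Sum>i\<in>UNIV. y i * d i * A i x) + t^2 * d x * A x x"
proof -
  have "qf d A (\<lambda>i. y i - (if i = x then t else 0)) =
     (\<Sum>i\<in>UNIV. \<Sum>j\<in>UNIV. y i * d i * A i j * y j
        - (if i = x then t * (d x * A x j * y j) else 0)
        - (if j = x then t * (y i * d i * A i x) else 0)
        + (if i = x \<and> j = x then t^2 * d x * A x x else 0))"
    unfolding qf_def
    by (intro sum.cong refl) (auto simp: algebra_simps power2_eq_square)
  also have "\<dots> = qf d A y - t * (\<Sum>j\<in>UNIV. d x * A x j * y j) - t * (\<Sum>i\<in>UNIV. y i * d i * A i x) + t^2 * d x * A x x"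
  proof -
    have e1: "(\<Sum>i\<in>UNIV. \<Sum>j\<in>UNIV. (if i = x then t * (d x * A x j * y j) else 0)) = t * (\<Sum>j\<in>UNIV. d x * A x j * y j)"
    proof -
      have "\<And>i. (\<Sum>j\<in>UNIV. (if i = x then t * (d x * A x j * y j) else 0)) = (if i = x then (\<Sum>j\<in>UNIV. t * (d x * A x j * y j)) else 0)"
        by auto
      then show ?thesis by (simp add: sum_distrib_left)
    qed
    have e2: "(\<Sum>i\<in>UNIV. \<Sum>j\<in>UNIV. (if j = x then t * (y i * d i * A i x) else 0)) = t * (\<Sum>i\<in>UNIV. y i * d i * A i x)"
      by (simp add: sum_distrib_left)
    have e3: "(\<Sum>i\<in>UNIV. \<Sum>j\<in>UNIV. (if i = x \<and> j = x then t^2 * d x * A x x else 0)) = t^2 * d x * A x x"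
    proof -
      have "\<And>i. (\<Sum>j\<in>UNIV. (if i = x \<and> j = x then t^2 * d x * A x x else 0)) = (if i = x then t^2 * d x * A x x else 0)"
        by auto
      then show ?thesis by simp
    qed
    show ?thesis unfolding qf_def
      by (simp only: sum.distrib sum_subtractf e1 e2 e3)
  qed
  finally show ?thesis .
qed

definition Psi :: "('i::finite \<Rightarrow> real) \<Rightarrow> ('i \<Rightarrow> 'i \<Rightarrow> int) \<Rightarrow> ('i \<Rightarrow> int) \<Rightarrow> ('i \<Rightarrow> real) \<Rightarrow> real" where
  "Psi d A mu0 y = qf d A y + 2 * (\<Sum>i\<in>UNIV. y i * d i * mu0 i)"

lemma orbit_inv:
  fixes A :: "'i::finite \<Rightarrow> 'i \<Rightarrow> int"
  assumes diag: "\<forall>i. A i i = 2" and dsym: "\<forall>i j. d i * of_int (A i j) = d j * of_int (A j i)"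
  shows "\<exists>c::'i \<Rightarrow> int. word_elt A xs mu0 = (\<lambda>k. mu0 k + (\<Sum>i\<in>UNIV. A k i * c i))
           \<and> Psi d A mu0 (\<lambda>i. of_int (c i)) = 0"
proof (induction xs)
  case Nil
  show ?case by (intro exI[of _ "\<lambda>_. 0"]) (simp add: Psi_def qf_def)
next
  case (Cons x xs)
  then obtain c where c: "word_elt A xs mu0 = (\<lambda>k. mu0 k + (\<Sum>i\<in>UNIV. A k i * c i))"
    and p: "Psi d A mu0 (\<lambda>i. of_int (c i)) = 0" by blast
  define nu where "nu = word_elt A xs mu0"
  define t where "t = nu x"
  define c' where "c' = (\<lambda>i. c i - (if i = x then t else 0))"
  have "word_elt A (x#xs) mu0 = (\<lambda>k. mu0 k + (\<Sum>i\<in>UNIV. A k i * c' i))"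
  proof (rule ext)
    fix k
    have "(\<Sum>i\<in>UNIV. A k i * c' i) = (\<Sum>i\<in>UNIV. A k i * c i - (if i = x then A k i * t else 0))"
      unfolding c'_def by (intro sum.cong) (auto simp: algebra_simps)
    also have "\<dots> = (\<Sum>i\<in>UNIV. A k i * c i) - A k x * t" by (simp add: sum_subtractf)
    finally show "word_elt A (x#xs) mu0 k = mu0 k + (\<Sum>i\<in>UNIV. A k i * c' i)"
      using c unfolding t_def nu_def by (simp add: sref_def algebra_simps)
  qed
  moreover have "Psi d A mu0 (\<lambda>i. of_int (c' i)) = 0"
  proof -
    let ?y = "\<lambda>i. real_of_int (c i)"
    have yc: "(\<lambda>i. real_of_int (c' i)) = (\<lambda>i. ?y i - (if i = x then real_of_int t else 0))"
      unfolding c'_def by (auto simp: fun_eq_iff)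
    have S: "(\<Sum>j\<in>UNIV. real_of_int (A x j) * ?y j) = real_of_int t - mu0 x"
    proof -
      have "nu x = mu0 x + (\<Sum>i\<in>UNIV. A x i * c i)" using c nu_def by simp
      then have "real_of_int t = mu0 x + (\<Sum>i\<in>UNIV. real_of_int (A x i) * ?y i)"
        unfolding t_def by simp
      then show ?thesis by simp
    qed
    have s1: "(\<Sum>j\<in>UNIV. d x * A x j * ?y j) = d x * (real_of_int t - mu0 x)"
      using S by (simp add: sum_distrib_left[symmetric] mult.assoc)
    have s2: "(\<Sum>i\<in>UNIV. ?y i * d i * A i x) = d x * (real_of_int t - mu0 x)"
    proof -
      have "(\<Sum>i\<in>UNIV. ?y i * d i * A i x) = (\<Sum>i\<in>UNIV. d x * (A x i * ?y i))"
        using dsym by (intro sum.cong refl) (metis mult.commute mult.left_commute)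
      then show ?thesis using S by (simp add: sum_distrib_left[symmetric])
    qed
    have s3: "(\<Sum>i\<in>UNIV. (?y i - (if i = x then real_of_int t else 0)) * d i * mu0 i)
        = (\<Sum>i\<in>UNIV. ?y i * d i * mu0 i) - real_of_int t * d x * mu0 x"
    proof -
      have "(\<Sum>i\<in>UNIV. (?y i - (if i = x then real_of_int t else 0)) * d i * mu0 i)
         = (\<Sum>i\<in>UNIV. ?y i * d i * mu0 i - (if i = x then real_of_int t * d x * mu0 x else 0))"
        by (intro sum.cong) (auto simp: algebra_simps)
      then show ?thesis by (simp add: sum_subtractf)
    qed
    have "Psi d A mu0 (\<lambda>i. of_int (c' i)) = Psi d A mu0 ?y
       - real_of_int t * (d x * (real_of_int t - mu0 x)) - real_of_int t * (d x * (real_of_int t - mu0 x))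
       + (real_of_int t)^2 * d x * 2 - 2 * (real_of_int t * d x * mu0 x)"
      unfolding Psi_def yc qf_update s1 s2 s3 using diag by (simp add: algebra_simps)
    also have "\<dots> = 0" using p by (simp add: algebra_simps power2_eq_square)
    finally show ?thesis .
  qed
  ultimately show ?case by blast
qed




lemma cs_diag: "cartan_simple A \<Longrightarrow> A i i = 2" by (simp add: cartan_simple_def)
lemma cs_off: "cartan_simple A \<Longrightarrow> i \<noteq> j \<Longrightarrow> A i j \<le> 0" by (simp add: cartan_simple_def)
lemma cs_zero: "cartan_simple A \<Longrightarrow> A i j = 0 \<longleftrightarrow> A j i = 0" by (simp add: cartan_simple_def)
lemma cs_d: "cartan_simple A \<Longrightarrow> \<exists>d. (\<forall>i. d i > 0) \<and> (\<forall>i j. d i * of_int (A i j) = d j * of_int (A j i))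
   \<and> (\<forall>x. x \<noteq> (\<lambda>_. 0) \<longrightarrow> qf d A x > 0)"
  unfolding cartan_simple_def qf_def by blast

lemma sum_two_pt:
  fixes f :: "'i::finite \<Rightarrow> real"
  shows "(\<Sum>j\<in>UNIV. f j * ((if j = i then a else 0) + (if j = k then b else 0))) = f i * a + f k * b"
proof -
  have "(\<Sum>j\<in>UNIV. f j * ((if j = i then a else 0) + (if j = k then b else 0)))
      = (\<Sum>j\<in>UNIV. (if j = i then f i * a else 0) + (if j = k then f k * b else 0))"
    by (intro sum.cong) (auto simp: distrib_left)
  then show ?thesis by (simp add: sum.distrib)
qed

lemma cs_prod:
  assumes cs: "cartan_simple A" and ik: "i \<noteq> k"
  shows "A i k * A k i < 4"
proof (rule ccontr)
  assume "\<not> A i k * A k i < 4"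
  then have ge: "A i k * A k i \<ge> 4" by simp
  obtain d where dpos: "\<forall>i. d i > 0" and dsym: "\<forall>i j. d i * of_int (A i j) = d j * of_int (A j i)"
    and pd: "\<forall>x. x \<noteq> (\<lambda>_. 0) \<longrightarrow> qf d A x > 0" using cs_d[OF cs] by blast
  define a :: real where "a = - of_int (A i k)"
  define x :: "_ \<Rightarrow> real" where "x = (\<lambda>l. (if l = i then a else 0) + (if l = k then 2 else 0))"
  have "x k = 2" using ik by (simp add: x_def)
  then have "x \<noteq> (\<lambda>_. 0)" by (metis zero_neq_numeral)
  then have pos: "qf d A x > 0" using pd by blast
  have "qf d A x = a * d i * A i i * a + a * d i * A i k * 2 + 2 * d k * A k i * a + 2 * d k * A k k * 2"
  proof -
    have inner: "\<And>l. (\<Sum>j\<in>UNIV. x l * d l * of_int (A l j) * x j) =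
        x l * (d l * of_int (A l i) * a + d l * of_int (A l k) * 2)"
    proof -
      fix l
      have eq: "(\<Sum>j\<in>UNIV. x l * d l * of_int (A l j) * x j) = x l * d l * of_int (A l i) * a + x l * d l * of_int (A l k) * 2"
        unfolding x_def by (rule sum_two_pt)
      show "(\<Sum>j\<in>UNIV. x l * d l * of_int (A l j) * x j) =
        x l * (d l * of_int (A l i) * a + d l * of_int (A l k) * 2)" unfolding eq by (simp add: algebra_simps)
    qed
    have "qf d A x = (\<Sum>l\<in>UNIV. (d l * of_int (A l i) * a + d l * of_int (A l k) * 2) * x l)"
      unfolding qf_def inner by (simp add: mult.commute)
    also have "\<dots> = (d i * of_int (A i i) * a + d i * of_int (A i k) * 2) * a + (d k * of_int (A k i) * a + d k * of_int (A k k) * 2) * 2"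
      unfolding x_def by (rule sum_two_pt)
    finally show ?thesis by (simp add: algebra_simps)
  qed
  also have "\<dots> = 2 * d k * (4 - of_int (A i k * A k i))"
  proof -
    have "d i * A i k = d k * A k i" using dsym by blast
    then have "d i * A i k * A i k = d k * A k i * A i k" by simp
    then show ?thesis using cs_diag[OF cs, of i] cs_diag[OF cs, of k] unfolding a_def
      by (simp add: algebra_simps)
  qed
  finally have "qf d A x = 2 * d k * (4 - of_int (A i k * A k i))" .
  moreover have "(4 - of_int (A i k * A k i) :: real) \<le> 0"
  proof -
    have "(4::real) \<le> of_int (A i k * A k i)" using ge by linarith
    then show ?thesis by linarith
  qed
  moreover have "d k > 0" using dpos by blast
  ultimately have "qf d A x \<le> 0" by (simp add: mult_nonneg_nonpos)
  then show False using pos by simp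
qed

lemma A_inj:
  fixes A :: "'i::finite \<Rightarrow> 'i \<Rightarrow> int"
  assumes cs: "cartan_simple A" and h: "\<forall>k. (\<Sum>i\<in>UNIV. A k i * c i) = 0"
  shows "c = (\<lambda>_. 0)"
proof (rule ccontr)
  assume ne: "c \<noteq> (\<lambda>_. 0)"
  obtain d where dsym: "\<forall>i j. d i * of_int (A i j) = d j * of_int (A j i)"
    and pd: "\<forall>x. x \<noteq> (\<lambda>_. 0) \<longrightarrow> qf d A x > 0" using cs_d[OF cs] by blast
  define y where "y = (\<lambda>i. real_of_int (c i))"
  have "y \<noteq> (\<lambda>_. 0)" using ne by (auto simp: y_def fun_eq_iff)
  then have pos: "qf d A y > 0" using pd by blast
  have "qf d A y = (\<Sum>i\<in>UNIV. \<Sum>j\<in>UNIV. y j * d j * of_int (A j i) * y i)"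
    unfolding qf_def using dsym by (intro sum.cong refl) (metis mult.commute mult.left_commute)
  also have "\<dots> = (\<Sum>j\<in>UNIV. \<Sum>i\<in>UNIV. y j * d j * of_int (A j i) * y i)"
    by (rule sum.swap)
  also have "\<dots> = (\<Sum>j\<in>UNIV. y j * d j * (\<Sum>i\<in>UNIV. of_int (A j i) * y i))"
    by (simp add: sum_distrib_left mult.assoc)
  also have "\<dots> = 0"
  proof -
    have "\<And>j. (\<Sum>i\<in>UNIV. of_int (A j i) * y i) = (0::real)"
    proof -
      fix j
      have "(\<Sum>i\<in>UNIV. of_int (A j i) * y i) = real_of_int (\<Sum>i\<in>UNIV. A j i * c i)"
        by (simp add: y_def)
      then show "(\<Sum>i\<in>UNIV. of_int (A j i) * y i) = (0::real)" using h by simp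
    qed
    then show ?thesis by simp
  qed
  finally show False using pos by simp
qed




definition orbit :: "('i \<Rightarrow> 'i \<Rightarrow> int) \<Rightarrow> ('i \<Rightarrow> int) \<Rightarrow> ('i \<Rightarrow> int) set" where
  "orbit A mu0 = range (\<lambda>xs. word_elt A xs mu0)"

lemma int_abs_le_sq: "\<bar>c::int\<bar> \<le> c * c"
proof (cases "c = 0")
  case False then have "\<bar>c\<bar> \<ge> 1" by simp
  then have "\<bar>c\<bar> * 1 \<le> \<bar>c\<bar> * \<bar>c\<bar>" by (intro mult_left_mono) auto
  then show ?thesis by (simp add: abs_mult[symmetric])
qed simp

lemma finite_orbit:
  fixes A :: "'i::finite \<Rightarrow> 'i \<Rightarrow> int"
  assumes cs: "cartan_simple A"
  shows "finite (orbit A mu0)"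
proof -
  obtain d where dpos: "\<forall>i. d i > 0" and dsym: "\<forall>i j. d i * of_int (A i j) = d j * of_int (A j i)"
    and pd: "\<forall>x. x \<noteq> (\<lambda>_. 0) \<longrightarrow> qf d A x > 0" using cs_d[OF cs] by blast
  obtain m where m: "m > 0" "\<forall>x. qf d A x \<ge> m * (\<Sum>i\<in>UNIV. (x i)^2)" using coercive[OF pd] by blast
  define e where "e = (\<lambda>i. d i * real_of_int (mu0 i))"
  define R where "R = 4 / m^2 * (\<Sum>i\<in>UNIV. (e i)^2)"
  define B where "B = ceiling R"
  have bound: "\<forall>i. c i \<in> {-B..B}" if "Psi d A mu0 (\<lambda>i. of_int (c i)) = 0" for c :: "'i \<Rightarrow> int"
  proof
    fix i
    let ?y = "\<lambda>i. real_of_int (c i)"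
    have q: "qf d A ?y = (\<Sum>i\<in>UNIV. -2 * (?y i * e i))"
      using that unfolding Psi_def e_def by (simp add: sum_distrib_left mult.assoc sum_negf)
    have amgm: "-2 * (?y i * e i) \<le> m/2 * (?y i)^2 + 2/m * (e i)^2" for i
    proof -
      have "0 \<le> (m * ?y i + 2 * e i)^2" by simp
      then have "0 \<le> (m * ?y i + 2 * e i)^2 / (2*m)" using m by simp
      also have "(m * ?y i + 2 * e i)^2 / (2*m) = m/2 * (?y i)^2 + 2/m * (e i)^2 + 2 * (?y i * e i)"
        using m by (simp add: field_simps power2_eq_square)
      finally show ?thesis by simp
    qed
    have "m * (\<Sum>i\<in>UNIV. (?y i)^2) \<le> (\<Sum>i\<in>UNIV. m/2 * (?y i)^2 + 2/m * (e i)^2)"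
    proof -
      have "m * (\<Sum>i\<in>UNIV. (?y i)^2) \<le> qf d A ?y" by (rule m(2)[rule_format])
      also have "\<dots> = (\<Sum>i\<in>UNIV. -2 * (?y i * e i))" by (rule q)
      also have "\<dots> \<le> (\<Sum>i\<in>UNIV. m/2 * (?y i)^2 + 2/m * (e i)^2)" by (rule sum_mono[OF amgm])
      finally show ?thesis .
    qed
    also have "\<dots> = m/2 * (\<Sum>i\<in>UNIV. (?y i)^2) + 2/m * (\<Sum>i\<in>UNIV. (e i)^2)"
      by (simp add: sum.distrib sum_distrib_left)
    finally have "m/2 * (\<Sum>i\<in>UNIV. (?y i)^2) \<le> 2/m * (\<Sum>i\<in>UNIV. (e i)^2)" by simp
    then have "(\<Sum>i\<in>UNIV. (?y i)^2) \<le> R" unfolding R_def using m(1)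
      by (simp add: field_simps power2_eq_square)
    moreover have "(?y i)^2 \<le> (\<Sum>i\<in>UNIV. (?y i)^2)"
      by (rule member_le_sum) auto
    ultimately have "(?y i)^2 \<le> R" by linarith
    moreover have "real_of_int \<bar>c i\<bar> \<le> (?y i)^2"
    proof -
      have "real_of_int \<bar>c i\<bar> \<le> real_of_int (c i * c i)" using int_abs_le_sq[of "c i"] by linarith
      then show ?thesis by (simp add: power2_eq_square)
    qed
    ultimately have "real_of_int \<bar>c i\<bar> \<le> R" by linarith
    then have "\<bar>c i\<bar> \<le> B" unfolding B_def by linarith
    then show "c i \<in> {-B..B}" by auto
  qed
  define F where "F = (\<lambda>c::'i \<Rightarrow> int. (\<lambda>k. mu0 k + (\<Sum>i\<in>UNIV. A k i * c i)))"
  have "orbit A mu0 \<subseteq> F ` (PiE UNIV (\<lambda>_. {-B..B}))"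
  proof
    fix nu assume "nu \<in> orbit A mu0"
    then obtain xs where "nu = word_elt A xs mu0" unfolding orbit_def by blast
    then obtain c where c: "nu = F c" "Psi d A mu0 (\<lambda>i. of_int (c i)) = 0"
      using orbit_inv[of A d xs mu0] cs_diag[OF cs] dsym unfolding F_def by blast
    then have "c \<in> PiE UNIV (\<lambda>_. {-B..B})" using bound by (auto simp: PiE_def)
    then show "nu \<in> F ` (PiE UNIV (\<lambda>_. {-B..B}))" using c by blast
  qed
  moreover have "finite (PiE (UNIV::'i set) (\<lambda>_. {-B..B}))" by (intro finite_PiE) auto
  ultimately show ?thesis using finite_subset by blast
qed




lemma orbit_sref: "nu \<in> orbit A mu0 \<Longrightarrow> sref A i nu \<in> orbit A mu0"
proof -
  assume "nu \<in> orbit A mu0"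
  then obtain xs where "nu = word_elt A xs mu0" unfolding orbit_def by blast
  then have "sref A i nu = word_elt A (i#xs) mu0" by simp
  then show ?thesis unfolding orbit_def by (rule range_eqI)
qed

lemma orbit_fire: "nu \<in> orbit A mu0 \<Longrightarrow> fire A nu nu' \<Longrightarrow> nu' \<in> orbit A mu0"
proof -
  assume a: "nu \<in> orbit A mu0" "fire A nu nu'"
  then obtain i where "nu' = sref A i nu" unfolding fire_def by blast
  then show ?thesis using orbit_sref[OF a(1)] by simp
qed

lemma orbit_fires: "(fire A)\<^sup>*\<^sup>* nu nu' \<Longrightarrow> nu \<in> orbit A mu0 \<Longrightarrow> nu' \<in> orbit A mu0"
proof (induction rule: rtranclp_induct)
  case base then show ?case by simp
next
  case (step y z) then show ?case using orbit_fire[of y A mu0 z] by blast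
qed

lemma orbit_self: "mu0 \<in> orbit A mu0"
proof -
  have "mu0 = word_elt A [] mu0" by simp
  then show ?thesis unfolding orbit_def by (rule range_eqI)
qed

lemma fire_step_coeff:
  fixes A :: "'i::finite \<Rightarrow> 'i \<Rightarrow> int"
  assumes "fire A a b"
  shows "\<exists>c. (\<forall>i. c i \<ge> 0) \<and> c \<noteq> (\<lambda>_. 0) \<and> b = (\<lambda>k. a k + (\<Sum>i\<in>UNIV. A k i * c i))"
proof -
  obtain j where j: "a j < 0" "b = sref A j a" using assms unfolding fire_def by blast
  define c where "c = (\<lambda>i. if i = j then - a j else 0)"
  have "c j \<noteq> 0" using j by (simp add: c_def)
  then have "c \<noteq> (\<lambda>_. 0)" by (auto simp: fun_eq_iff)
  moreover have "\<forall>i. c i \<ge> 0" using j by (simp add: c_def)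
  moreover have "b = (\<lambda>k. a k + (\<Sum>i\<in>UNIV. A k i * c i))"
  proof (rule ext)
    fix k
    have "(\<Sum>i\<in>UNIV. A k i * c i) = (\<Sum>i\<in>UNIV. if i = j then - (A k j * a j) else 0)"
      unfolding c_def by (intro sum.cong) auto
    then show "b k = a k + (\<Sum>i\<in>UNIV. A k i * c i)" using j by (simp add: sref_def)
  qed
  ultimately show ?thesis by blast
qed

lemma fires_coeff:
  fixes A :: "'i::finite \<Rightarrow> 'i \<Rightarrow> int"
  assumes "(fire A)\<^sup>*\<^sup>* a b"
  shows "\<exists>c. (\<forall>i. c i \<ge> 0) \<and> b = (\<lambda>k. a k + (\<Sum>i\<in>UNIV. A k i * c i))"
  using assms
proof (induction rule: rtranclp_induct)
  case base
  show ?case by (intro exI[of _ "\<lambda>_. 0"]) simp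
next
  case (step y z)
  from step(3) obtain c1 where c1: "\<forall>i. c1 i \<ge> 0" "y = (\<lambda>k. a k + (\<Sum>i\<in>UNIV. A k i * c1 i))"
    by (elim exE conjE)
  from fire_step_coeff[OF step(2)] obtain c2 where c2: "\<forall>i. c2 i \<ge> 0" "z = (\<lambda>k. y k + (\<Sum>i\<in>UNIV. A k i * c2 i))"
    by (elim exE conjE)
  define c where "c = (\<lambda>i. c1 i + c2 i)"
  have e1: "z = (\<lambda>k. a k + (\<Sum>i\<in>UNIV. A k i * c i))"
  proof (rule ext)
    fix k
    have "z k = y k + (\<Sum>i\<in>UNIV. A k i * c2 i)" using c2(2) by simp
    moreover have "y k = a k + (\<Sum>i\<in>UNIV. A k i * c1 i)" using c1(2) by simp
    ultimately show "z k = a k + (\<Sum>i\<in>UNIV. A k i * c i)" unfolding c_def by (simp add: distrib_left sum.distrib)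
  qed
  have e2: "\<forall>i. c i \<ge> 0" using c1 c2 unfolding c_def by (simp add: add_nonneg_nonneg)
  show ?case by (intro exI[of _ c] conjI e1 e2)
qed

definition frel :: "('i \<Rightarrow> 'i \<Rightarrow> int) \<Rightarrow> ('i \<Rightarrow> int) \<Rightarrow> (('i \<Rightarrow> int) \<times> ('i \<Rightarrow> int)) set" where
  "frel A mu0 = {(b, a). a \<in> orbit A mu0 \<and> fire A a b}"

lemma frel_trancl:
  fixes A :: "'i::finite \<Rightarrow> 'i \<Rightarrow> int"
  assumes "(x, y) \<in> (frel A mu0)\<^sup>+"
  shows "\<exists>c. (\<forall>i. c i \<ge> 0) \<and> c \<noteq> (\<lambda>_. 0) \<and> x = (\<lambda>k. y k + (\<Sum>i\<in>UNIV. A k i * c i))"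
  using assms
proof (induction rule: converse_trancl_induct)
  case (base x)
  then have "fire A y x" unfolding frel_def by simp
  then show ?case by (rule fire_step_coeff)
next
  case (step x z)
  from step(1) have "fire A z x" unfolding frel_def by simp
  from fire_step_coeff[OF this] obtain c1 where c1: "\<forall>i. c1 i \<ge> 0" "c1 \<noteq> (\<lambda>_. 0)" "x = (\<lambda>k. z k + (\<Sum>i\<in>UNIV. A k i * c1 i))"
    by (elim exE conjE)
  from step(3) obtain c2 where c2: "\<forall>i. c2 i \<ge> 0" "z = (\<lambda>k. y k + (\<Sum>i\<in>UNIV. A k i * c2 i))" by (elim exE conjE)
  define c where "c = (\<lambda>i. c1 i + c2 i)"
  have e1: "x = (\<lambda>k. y k + (\<Sum>i\<in>UNIV. A k i * c i))"
  proof (rule ext)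
    fix k
    have "x k = z k + (\<Sum>i\<in>UNIV. A k i * c1 i)" using c1(3) by simp
    moreover have "z k = y k + (\<Sum>i\<in>UNIV. A k i * c2 i)" using c2(2) by simp
    ultimately show "x k = y k + (\<Sum>i\<in>UNIV. A k i * c i)" unfolding c_def by (simp add: distrib_left sum.distrib)
  qed
  have e2: "\<forall>i. c i \<ge> 0" using c1 c2 unfolding c_def by (simp add: add_nonneg_nonneg)
  have e3: "c \<noteq> (\<lambda>_. 0)"
  proof
    assume h: "c = (\<lambda>_. 0)"
    have "c1 = (\<lambda>_. 0)"
    proof
      fix i
      have "c1 i + c2 i = 0" using fun_cong[OF h, of i] unfolding c_def by simp
      moreover have "c1 i \<ge> 0" "c2 i \<ge> 0" using c1(1) c2(1) by auto
      ultimately show "c1 i = 0" by linarith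
    qed
    then show False using c1(2) by simp
  qed
  show ?case by (intro exI[of _ c] conjI e1 e2 e3)
qed

lemma wf_frel:
  fixes A :: "'i::finite \<Rightarrow> 'i \<Rightarrow> int"
  assumes cs: "cartan_simple A"
  shows "wf (frel A mu0)"
proof (rule finite_acyclic_wf)
  have "frel A mu0 \<subseteq> orbit A mu0 \<times> orbit A mu0"
  proof
    fix p assume "p \<in> frel A mu0"
    then obtain a b where p: "p = (b, a)" "a \<in> orbit A mu0" "fire A a b" unfolding frel_def by blast
    then show "p \<in> orbit A mu0 \<times> orbit A mu0" using orbit_fire[OF p(2) p(3)] by simp
  qed
  then show "finite (frel A mu0)" using finite_orbit[OF cs, of mu0] finite_subset by blast
  show "acyclic (frel A mu0)"
  proof (unfold acyclic_def, intro allI notI)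
    fix x assume "(x, x) \<in> (frel A mu0)\<^sup>+"
    then obtain c where c: "\<forall>i. c i \<ge> 0" "c \<noteq> (\<lambda>_. 0)" "x = (\<lambda>k. x k + (\<Sum>i\<in>UNIV. A k i * c i))"
      using frel_trancl by blast
    have "\<forall>k. (\<Sum>i\<in>UNIV. A k i * c i) = 0"
    proof
      fix k show "(\<Sum>i\<in>UNIV. A k i * c i) = 0" using fun_cong[OF c(3), of k] by simp
    qed
    then show False using A_inj[OF cs] c(2) by blast
  qed
qed

lemma local_conf:
  assumes cs: "cartan_simple A" and "fire A mu b" "fire A mu c"
  shows "\<exists>u. (fire A)\<^sup>*\<^sup>* b u \<and> (fire A)\<^sup>*\<^sup>* c u"
proof -
  obtain i k where ik: "mu i < 0" "b = sref A i mu" "mu k < 0" "c = sref A k mu"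
    using assms unfolding fire_def by blast
  show ?thesis
  proof (cases "i = k")
    case True then show ?thesis using ik by blast
  next
    case False
    have "A k i * A i k < 4" using cs_prod[OF cs, of k i] False by simp
    then have "(A k i = 0 \<and> A i k = 0) \<or> (A k i = -1 \<and> A i k = -1) \<or> (A k i = -1 \<and> A i k = -2)
       \<or> (A k i = -2 \<and> A i k = -1) \<or> (A k i = -1 \<and> A i k = -3) \<or> (A k i = -3 \<and> A i k = -1)"
      using int_pair_cases[of "A k i" "A i k"] cs_off[OF cs, of k i] cs_off[OF cs, of i k] cs_zero[OF cs, of k i] False
      by auto
    then show ?thesis using rank2_cases[of A i k mu] cs_diag[OF cs] False ik by auto
  qed
qed

lemma newman:
  fixes A :: "'i::finite \<Rightarrow> 'i \<Rightarrow> int"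
  assumes cs: "cartan_simple A"
  shows "a \<in> orbit A mu0 \<Longrightarrow> (fire A)\<^sup>*\<^sup>* a b \<Longrightarrow> (fire A)\<^sup>*\<^sup>* a c \<Longrightarrow>
           \<exists>u. (fire A)\<^sup>*\<^sup>* b u \<and> (fire A)\<^sup>*\<^sup>* c u"
proof (induction a arbitrary: b c rule: wf_induct_rule[OF wf_frel[OF cs, of mu0]])
  case (1 a)
  show ?case
  proof (cases "b = a")
    case True then show ?thesis using 1 by blast
  next
    case bne: False
    show ?thesis
    proof (cases "c = a")
      case True then show ?thesis using 1 by blast
    next
      case cne: False
      obtain b1 where b1: "fire A a b1" "(fire A)\<^sup>*\<^sup>* b1 b"
        using 1(3) bne by (metis converse_rtranclpE)
      obtain c1 where c1: "fire A a c1" "(fire A)\<^sup>*\<^sup>* c1 c"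
        using 1(4) cne by (metis converse_rtranclpE)
      obtain u0 where u0: "(fire A)\<^sup>*\<^sup>* b1 u0" "(fire A)\<^sup>*\<^sup>* c1 u0"
        using local_conf[OF cs b1(1) c1(1)] by blast
      have rb: "(b1, a) \<in> frel A mu0" "b1 \<in> orbit A mu0"
        using 1(2) b1(1) orbit_fire unfolding frel_def by auto
      have rc: "(c1, a) \<in> frel A mu0" "c1 \<in> orbit A mu0"
        using 1(2) c1(1) orbit_fire unfolding frel_def by auto
      obtain u1 where u1: "(fire A)\<^sup>*\<^sup>* b u1" "(fire A)\<^sup>*\<^sup>* u0 u1"
        using 1(1)[OF rb(1) rb(2) b1(2) u0(1)] by blast
      have "(fire A)\<^sup>*\<^sup>* c1 u1" using u0(2) u1(2) by simp
      then obtain u2 where u2: "(fire A)\<^sup>*\<^sup>* c u2" "(fire A)\<^sup>*\<^sup>* u1 u2"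
        using 1(1)[OF rc(1) rc(2) c1(2)] by blast
      have "(fire A)\<^sup>*\<^sup>* b u2" using u1(1) u2(2) by simp
      then show ?thesis using u2(1) by blast
    qed
  qed
qed

lemma church_rosser:
  fixes A :: "'i::finite \<Rightarrow> 'i \<Rightarrow> int"
  assumes cs: "cartan_simple A"
  shows "\<exists>z. (fire A)\<^sup>*\<^sup>* mu0 z \<and> (fire A)\<^sup>*\<^sup>* (word_elt A xs mu0) z"
proof (induction xs)
  case Nil then show ?case by auto
next
  case (Cons x xs)
  then obtain z where z: "(fire A)\<^sup>*\<^sup>* mu0 z" "(fire A)\<^sup>*\<^sup>* (word_elt A xs mu0) z" by blast
  define nu where "nu = word_elt A xs mu0"
  have nuO: "nu \<in> orbit A mu0" unfolding nu_def orbit_def by (rule rangeI)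
  have w: "word_elt A (x#xs) mu0 = sref A x nu" by (simp add: nu_def)
  consider "nu x < 0" | "nu x = 0" | "nu x > 0" by linarith
  then show ?case
  proof cases
    case 1
    then have "fire A nu (sref A x nu)" unfolding fire_def by blast
    then obtain z' where "(fire A)\<^sup>*\<^sup>* z z'" "(fire A)\<^sup>*\<^sup>* (sref A x nu) z'"
      using newman[OF cs nuO, of z "sref A x nu"] z(2) nu_def by blast
    then have "(fire A)\<^sup>*\<^sup>* mu0 z'" "(fire A)\<^sup>*\<^sup>* (word_elt A (x#xs) mu0) z'"
      using z(1) w by auto
    then show ?thesis by blast
  next
    case 2
    then have "sref A x nu = nu" by (simp add: sref_def)
    then show ?thesis using z w nu_def by auto
  next
    case 3
    have "sref A x nu x = - nu x" using cs_diag[OF cs, of x] by (simp add: sref_def)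
    then have "fire A (sref A x nu) nu" unfolding fire_def
      using 3 sref_sref[of A x nu] cs_diag[OF cs, of x] by (intro exI[of _ x]) auto
    then have "(fire A)\<^sup>*\<^sup>* (sref A x nu) z" using z(2) nu_def by (meson converse_rtranclp_into_rtranclp)
    then show ?thesis using z(1) w by auto
  qed
qed

lemma dominance:
  fixes A :: "'i::finite \<Rightarrow> 'i \<Rightarrow> int"
  assumes cs: "cartan_simple A" and dom: "\<forall>i. lam i \<ge> 0"
  shows "\<exists>c. (\<forall>i. c i \<ge> 0) \<and> lam = (\<lambda>k. word_elt A xs lam k + (\<Sum>i\<in>UNIV. A k i * c i))"
proof -
  define mu0 where "mu0 = word_elt A xs lam"
  have "lam = word_elt A (rev xs) mu0" unfolding mu0_def using word_rev_inv1[of A xs lam] cs_diag[OF cs] by simp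
  then obtain z where z: "(fire A)\<^sup>*\<^sup>* mu0 z" "(fire A)\<^sup>*\<^sup>* lam z"
    using church_rosser[OF cs, of mu0 "rev xs"] by auto
  have "z = lam"
  proof (rule ccontr)
    assume "z \<noteq> lam"
    then obtain y where "fire A lam y" using z(2) by (metis converse_rtranclpE)
    then obtain i where "lam i < 0" unfolding fire_def by blast
    then show False using dom by (metis not_le)
  qed
  then show ?thesis using fires_coeff[OF z(1)] unfolding mu0_def by simp
qed




lemma word_affine:
  "word_elt A xs (\<lambda>k. x k + t * y k) = (\<lambda>k. word_elt A xs x k + t * word_elt A xs y k)"
proof (induction xs)
  case Nil then show ?case by simp
next
  case (Cons i xs)
  show ?case by (rule ext) (simp add: Cons sref_def algebra_simps)
qed

lemma word_zero: "word_elt A xs (\<lambda>_. 0) = (\<lambda>_. 0)"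
  by (induction xs) (simp_all add: sref_def)

lemma fund_dom: "\<forall>i. fund_weight a i \<ge> 0" by (simp add: fund_weight_def)

lemma QP_cancel:
  fixes A :: "'i::finite \<Rightarrow> 'i \<Rightarrow> int"
  assumes cs: "cartan_simple A" and t: "t1 > 0" "t2 < 0"
    and c1: "\<forall>i. c1 i \<ge> 0" "\<forall>k. t1 * dl k = (\<Sum>i\<in>UNIV. A k i * c1 i)"
    and c2: "\<forall>i. c2 i \<ge> 0" "\<forall>k. t2 * dl k = (\<Sum>i\<in>UNIV. A k i * c2 i)"
  shows "dl = (\<lambda>_. 0)"
proof -
  define c where "c = (\<lambda>i. (- t2) * c1 i + t1 * c2 i)"
  have "\<forall>k. (\<Sum>i\<in>UNIV. A k i * c i) = 0"
  proof
    fix k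
    have "(\<Sum>i\<in>UNIV. A k i * c i) = (- t2) * (\<Sum>i\<in>UNIV. A k i * c1 i) + t1 * (\<Sum>i\<in>UNIV. A k i * c2 i)"
    proof -
      have "(\<Sum>i\<in>UNIV. A k i * c i) = (\<Sum>i\<in>UNIV. (- t2) * (A k i * c1 i) + t1 * (A k i * c2 i))"
        unfolding c_def by (intro sum.cong) (auto simp: algebra_simps)
      then show ?thesis by (simp only: sum.distrib sum_distrib_left[symmetric])
    qed
    also have "\<dots> = (- t2) * (t1 * dl k) + t1 * (t2 * dl k)" using c1(2) c2(2) by simp
    also have "\<dots> = 0" by (simp add: algebra_simps)
    finally show "(\<Sum>i\<in>UNIV. A k i * c i) = 0" .
  qed
  then have c0: "c = (\<lambda>_. 0)" by (rule A_inj[OF cs])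
  have "\<forall>i. c1 i = 0"
  proof
    fix i
    have "(- t2) * c1 i + t1 * c2 i = 0" using fun_cong[OF c0, of i] unfolding c_def by simp
    moreover have "(- t2) * c1 i \<ge> 0" "t1 * c2 i \<ge> 0" using t c1(1) c2(1)
      by (simp_all add: mult_nonneg_nonneg mult_nonpos_nonneg)
    ultimately have "(- t2) * c1 i = 0" by linarith
    then show "c1 i = 0" using t by simp
  qed
  then have "\<forall>k. t1 * dl k = 0" using c1(2) by simp
  then show ?thesis using t by (auto simp: fun_eq_iff)
qed

lemma conj_formula:
  fixes A :: "'i::finite \<Rightarrow> 'i \<Rightarrow> int"
  assumes cs: "cartan_simple A"
  shows "word_elt A (rev ys @ [j] @ ys) nu =
     (\<lambda>k. nu k - word_elt A ys nu j * word_elt A (rev ys) (simple_root A j) k)"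
proof -
  have diag: "\<forall>i. A i i = 2" using cs_diag[OF cs] by blast
  have "sref A j (word_elt A ys nu) = (\<lambda>k. word_elt A ys nu k + (- word_elt A ys nu j) * simple_root A j k)"
    by (simp add: sref_def simple_root_def)
  then have "word_elt A (rev ys @ [j] @ ys) nu =
      word_elt A (rev ys) (\<lambda>k. word_elt A ys nu k + (- word_elt A ys nu j) * simple_root A j k)"
    by (simp add: word_elt_append)
  also have "\<dots> = (\<lambda>k. nu k + (- word_elt A ys nu j) * word_elt A (rev ys) (simple_root A j) k)"
    unfolding word_affine using word_rev_inv1[of A ys, OF diag] by simp
  finally show ?thesis by simp
qed

lemma sign_def:
  fixes A :: "'i::finite \<Rightarrow> 'i \<Rightarrow> int"
  assumes cs: "cartan_simple A"
  shows "(\<forall>a. word_elt A ys (fund_weight a) j \<ge> 0) \<or> (\<forall>a. word_elt A ys (fund_weight a) j \<le> 0)"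
proof (rule ccontr)
  assume "\<not> ?thesis"
  then obtain a b where ab: "word_elt A ys (fund_weight a) j < 0" "word_elt A ys (fund_weight b) j > 0"
    by (auto simp: not_le)
  have diag: "\<forall>i. A i i = 2" using cs_diag[OF cs] by blast
  define dl where "dl = word_elt A (rev ys) (simple_root A j)"
  have rep: "\<exists>c. (\<forall>i. c i \<ge> 0) \<and> (\<forall>k. word_elt A ys (fund_weight e) j * dl k = (\<Sum>i\<in>UNIV. A k i * c i))" for e
  proof -
    obtain c where c: "\<forall>i. c i \<ge> 0"
      "fund_weight e = (\<lambda>k. word_elt A (rev ys @ [j] @ ys) (fund_weight e) k + (\<Sum>i\<in>UNIV. A k i * c i))"
      using dominance[OF cs fund_dom[of e], of "rev ys @ [j] @ ys"] by blast
    have "\<forall>k. word_elt A ys (fund_weight e) j * dl k = (\<Sum>i\<in>UNIV. A k i * c i)"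
    proof
      fix k
      have "fund_weight e k = fund_weight e k - word_elt A ys (fund_weight e) j * dl k + (\<Sum>i\<in>UNIV. A k i * c i)"
        using fun_cong[OF c(2), of k] unfolding conj_formula[OF cs] dl_def by simp
      then show "word_elt A ys (fund_weight e) j * dl k = (\<Sum>i\<in>UNIV. A k i * c i)" by simp
    qed
    then show ?thesis using c(1) by blast
  qed
  obtain c1 where c1: "\<forall>i. c1 i \<ge> 0" "\<forall>k. word_elt A ys (fund_weight b) j * dl k = (\<Sum>i\<in>UNIV. A k i * c1 i)"
    using rep by blast
  obtain c2 where c2: "\<forall>i. c2 i \<ge> 0" "\<forall>k. word_elt A ys (fund_weight a) j * dl k = (\<Sum>i\<in>UNIV. A k i * c2 i)"
    using rep by blast
  have "dl = (\<lambda>_. 0)" by (rule QP_cancel[OF cs ab(2) ab(1) c1 c2])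
  then have "word_elt A ys dl = (\<lambda>_. 0)" by (simp add: word_zero)
  moreover have "word_elt A ys dl = simple_root A j" unfolding dl_def using word_rev_inv2[of A ys, OF diag] by simp
  ultimately have "simple_root A j j = 0" by simp
  then show False using diag by (simp add: simple_root_def)
qed

lemma nonzero:
  fixes A :: "'i::finite \<Rightarrow> 'i \<Rightarrow> int"
  assumes cs: "cartan_simple A"
  shows "\<exists>a. word_elt A ys (fund_weight a) j \<noteq> 0"
proof (rule ccontr)
  assume "\<not> ?thesis"
  then have z: "\<forall>a. word_elt A ys (fund_weight a) j = 0" by simp
  have diag: "\<forall>i. A i i = 2" using cs_diag[OF cs] by blast
  define mu where "mu = word_elt A (rev ys) (simple_root A j)"
  have "word_elt A ys mu j = (\<Sum>a\<in>UNIV. mu a * word_elt A ys (fund_weight a) j)" by (rule word_lin_fund)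
  also have "\<dots> = 0" using z by simp
  finally have "word_elt A ys mu j = 0" .
  moreover have "word_elt A ys mu = simple_root A j" unfolding mu_def using word_rev_inv2[of A ys, OF diag] by simp
  ultimately show False using diag by (simp add: simple_root_def)
qed




lemma conj_key:
  fixes A :: "'i::finite \<Rightarrow> 'i \<Rightarrow> int"
  assumes cs: "cartan_simple A"
    and supp: "\<forall>a. a \<noteq> i \<longrightarrow> word_elt A ys (fund_weight a) j = 0"
    and pos: "word_elt A ys (fund_weight i) j > 0"
  shows "sref A j \<circ> word_elt A ys = word_elt A ys \<circ> sref A i"
proof -
  have diag: "\<forall>i. A i i = 2" using cs_diag[OF cs] by blast
  define c0 where "c0 = word_elt A ys (fund_weight i) j"
  have lin: "word_elt A ys nu j = nu i * c0" for nu
  proof -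
    have "word_elt A ys nu j = (\<Sum>a\<in>UNIV. nu a * word_elt A ys (fund_weight a) j)" by (rule word_lin_fund)
    also have "\<dots> = (\<Sum>a\<in>UNIV. if a = i then nu i * c0 else 0)"
      using supp unfolding c0_def by (intro sum.cong) auto
    also have "\<dots> = nu i * c0" by simp
    finally show ?thesis .
  qed
  define dl where "dl = word_elt A (rev ys) (simple_root A j)"
  have T: "word_elt A (rev ys @ [j] @ ys) nu = (\<lambda>k. nu k - nu i * c0 * dl k)" for nu
    unfolding conj_formula[OF cs] lin dl_def by simp
  have "word_elt A ys dl = simple_root A j" unfolding dl_def using word_rev_inv2[of A ys, OF diag] by simp
  then have "word_elt A ys dl j = 2" using diag by (simp add: simple_root_def)
  then have hd: "dl i * c0 = 2" using lin[of dl] by simp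
  define ep where "ep = (\<lambda>k. c0 * dl k - A k i)"
  have g: "word_elt A (rev ys @ [j] @ ys @ [i]) nu = (\<lambda>k. nu k + nu i * ep k)" for nu
  proof -
    have "word_elt A (rev ys @ [j] @ ys @ [i]) nu = word_elt A (rev ys @ [j] @ ys) (sref A i nu)"
      using word_elt_append[of A "rev ys @ [j] @ ys" "[i]"] by simp
    also have "\<dots> = (\<lambda>k. nu k + nu i * ep k)"
    proof (rule ext)
      fix k
      have si: "sref A i nu i = - nu i" using diag by (simp add: sref_def)
      have "word_elt A (rev ys @ [j] @ ys) (sref A i nu) k = sref A i nu k - sref A i nu i * c0 * dl k"
        unfolding T by simp
      also have "\<dots> = (nu k - nu i * A k i) - (- nu i) * c0 * dl k" unfolding si by (simp add: sref_def)
      finally have "word_elt A (rev ys @ [j] @ ys) (sref A i nu) k = (nu k - nu i * A k i) - (- nu i) * c0 * dl k" .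
      also have "\<dots> = nu k + nu i * (c0 * dl k - A k i)" by (simp add: algebra_simps)
      finally show "word_elt A (rev ys @ [j] @ ys) (sref A i nu) k = nu k + nu i * ep k" unfolding ep_def .
    qed
    finally show ?thesis .
  qed
  have gi: "word_elt A ([i] @ rev ys @ [j] @ ys) nu = (\<lambda>k. nu k - nu i * ep k)" for nu
  proof -
    have "word_elt A ([i] @ rev ys @ [j] @ ys) nu = sref A i (word_elt A (rev ys @ [j] @ ys) nu)"
      by simp
    also have "\<dots> = (\<lambda>k. nu k - nu i * ep k)"
    proof (rule ext)
      fix k
      have h2: "nu i * c0 * dl i = nu i * 2" using hd by (metis mult.assoc mult.commute)
      have "sref A i (word_elt A (rev ys @ [j] @ ys) nu) k = (nu k - nu i * c0 * dl k) - (nu i - nu i * c0 * dl i) * A k i"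
        unfolding T by (simp add: sref_def)
      also have "\<dots> = nu k - nu i * (c0 * dl k - A k i)" unfolding h2 by (simp add: algebra_simps)
      finally show "sref A i (word_elt A (rev ys @ [j] @ ys) nu) k = nu k - nu i * ep k" unfolding ep_def .
    qed
    finally show ?thesis .
  qed
  obtain c1 where c1: "\<forall>l. c1 l \<ge> 0"
    "fund_weight i = (\<lambda>k. word_elt A (rev ys @ [j] @ ys @ [i]) (fund_weight i) k + (\<Sum>l\<in>UNIV. A k l * c1 l))"
    using dominance[OF cs fund_dom[of i], of "rev ys @ [j] @ ys @ [i]"] by blast
  obtain c2 where c2: "\<forall>l. c2 l \<ge> 0"
    "fund_weight i = (\<lambda>k. word_elt A ([i] @ rev ys @ [j] @ ys) (fund_weight i) k + (\<Sum>l\<in>UNIV. A k l * c2 l))"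
    using dominance[OF cs fund_dom[of i], of "[i] @ rev ys @ [j] @ ys"] by blast
  have e1: "\<forall>k. (-1) * ep k = (\<Sum>l\<in>UNIV. A k l * c1 l)"
  proof
    fix k
    show "(-1) * ep k = (\<Sum>l\<in>UNIV. A k l * c1 l)"
      using fun_cong[OF c1(2), of k] unfolding g by (simp add: fund_weight_def)
  qed
  have e2: "\<forall>k. 1 * ep k = (\<Sum>l\<in>UNIV. A k l * c2 l)"
  proof
    fix k
    show "1 * ep k = (\<Sum>l\<in>UNIV. A k l * c2 l)"
      using fun_cong[OF c2(2), of k] unfolding gi by (simp add: fund_weight_def)
  qed
  have "ep = (\<lambda>_. 0)"
    by (rule QP_cancel[OF cs _ _ c2(1) e2 c1(1) e1]) simp_all
  then have cd: "\<forall>k. c0 * dl k = A k i" unfolding ep_def by (auto simp: fun_eq_iff)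
  have T2: "word_elt A (rev ys @ [j] @ ys) nu = sref A i nu" for nu
  proof (rule ext)
    fix k
    have "nu i * c0 * dl k = nu i * A k i" using cd by (metis mult.assoc)
    then show "word_elt A (rev ys @ [j] @ ys) nu k = sref A i nu k" unfolding T sref_def by simp
  qed
  show ?thesis
  proof (rule ext)
    fix nu
    have "word_elt A (rev ys @ [j] @ ys) nu = word_elt A (rev ys) (sref A j (word_elt A ys nu))"
      by (simp add: word_elt_append)
    then have "word_elt A ys (word_elt A (rev ys @ [j] @ ys) nu) = sref A j (word_elt A ys nu)"
      using word_rev_inv2[of A ys, OF diag] by simp
    then show "(sref A j \<circ> word_elt A ys) nu = (word_elt A ys \<circ> sref A i) nu" unfolding T2 by simp
  qed
qed




lemma deletion:
  fixes A :: "'i::finite \<Rightarrow> 'i \<Rightarrow> int"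
  assumes cs: "cartan_simple A" and neg: "word_elt A xs (fund_weight a0) j < 0"
  shows "\<exists>zs. length zs < length xs \<and> word_elt A zs = sref A j \<circ> word_elt A xs"
proof -
  have diag: "\<forall>i. A i i = 2" using cs_diag[OF cs] by blast
  define pos where "pos = (\<lambda>k. \<forall>a. word_elt A (take k xs) (fund_weight a) j \<ge> 0)"
  have p0: "pos 0" unfolding pos_def by (simp add: fund_weight_def)
  have pn: "\<not> pos (length xs)" unfolding pos_def using neg by (auto simp: not_le)
  define K where "K = (LEAST k. \<not> pos k)"
  have K1: "\<not> pos K" unfolding K_def using pn by (rule LeastI)
  have K2: "K \<le> length xs" unfolding K_def using pn by (rule Least_le)
  have K3: "K \<noteq> 0"
  proof
    assume "K = 0" then show False using K1 p0 by simp
  qed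
  define k where "k = K - 1"
  have Kk: "K = Suc k" using K3 unfolding k_def by simp
  have pk: "pos k" using not_less_Least[of k "\<lambda>k. \<not> pos k"] Kk unfolding K_def by auto
  have kl: "k < length xs" using K2 Kk by simp
  define i where "i = xs ! k"
  define p where "p = word_elt A (take k xs)"
  have tk: "take (Suc k) xs = take k xs @ [i]" unfolding i_def using kl by (simp add: take_Suc_conv_app_nth)
  have p': "word_elt A (take (Suc k) xs) = p \<circ> sref A i" unfolding tk p_def by (simp add: word_elt_append)
  have nsuc: "\<forall>a. word_elt A (take (Suc k) xs) (fund_weight a) j \<le> 0"
    using sign_def[OF cs, of "take (Suc k) xs" j] K1 Kk unfolding pos_def by auto
  have fix_a: "sref A i (fund_weight a) = fund_weight a" if "a \<noteq> i" for a
    using that by (auto simp: sref_def fund_weight_def)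
  have supp: "\<forall>a. a \<noteq> i \<longrightarrow> word_elt A (take k xs) (fund_weight a) j = 0"
  proof (intro allI impI)
    fix a assume "a \<noteq> i"
    then have "word_elt A (take k xs) (fund_weight a) j = word_elt A (take (Suc k) xs) (fund_weight a) j"
      unfolding p' p_def using fix_a by simp
    then show "word_elt A (take k xs) (fund_weight a) j = 0" using nsuc pk unfolding pos_def
      by (metis order_antisym)
  qed
  have posi: "word_elt A (take k xs) (fund_weight i) j > 0"
  proof -
    obtain a where a: "word_elt A (take k xs) (fund_weight a) j \<noteq> 0" using nonzero[OF cs] by blast
    then have "a = i" using supp by blast
    then show ?thesis using a pk unfolding pos_def by (metis less_le)
  qed
  have cj: "sref A j \<circ> p = p \<circ> sref A i" unfolding p_def by (rule conj_key[OF cs supp posi])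
  define q where "q = word_elt A (drop (Suc k) xs)"
  have xs_eq: "xs = take k xs @ [i] @ drop (Suc k) xs" unfolding i_def using kl by (simp add: id_take_nth_drop)
  have wx: "word_elt A xs = p \<circ> sref A i \<circ> q"
    unfolding p_def q_def by (subst xs_eq) (simp add: word_elt_append comp_assoc)
  define zs where "zs = take k xs @ drop (Suc k) xs"
  have "length zs < length xs" unfolding zs_def using kl by simp
  moreover have "word_elt A zs = sref A j \<circ> word_elt A xs"
  proof (rule ext)
    fix nu
    have "(sref A j \<circ> word_elt A xs) nu = (sref A j \<circ> p) (sref A i (q nu))" unfolding wx by simp
    also have "\<dots> = p (sref A i (sref A i (q nu)))" unfolding cj by simp
    also have "\<dots> = p (q nu)" using sref_sref diag by metis
    also have "\<dots> = word_elt A zs nu" unfolding zs_def p_def q_def by (simp add: word_elt_append)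
    finally show "word_elt A zs nu = (sref A j \<circ> word_elt A xs) nu" by simp
  qed
  ultimately show ?thesis by blast
qed

lemma wl_le: "word_elt A xs = w \<Longrightarrow> weyl_length A w \<le> length xs"
  unfolding weyl_length_def by (rule Least_le) blast

lemma wl_ex: "w \<in> weyl A \<Longrightarrow> \<exists>xs. word_elt A xs = w \<and> length xs = weyl_length A w"
proof -
  assume "w \<in> weyl A"
  then obtain ys where "word_elt A ys = w" unfolding weyl_def by blast
  then have "\<exists>n xs. length xs = n \<and> word_elt A xs = w" by blast
  then have "\<exists>xs. length xs = (LEAST n. \<exists>xs. length xs = n \<and> word_elt A xs = w) \<and> word_elt A xs = w"
    by (rule LeastI_ex[where P = "\<lambda>n. \<exists>xs. length xs = n \<and> word_elt A xs = w"])
  then show ?thesis unfolding weyl_length_def by blast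
qed

lemma E:
  fixes A :: "'i::finite \<Rightarrow> 'i \<Rightarrow> int"
  assumes cs: "cartan_simple A" and w: "w \<in> weyl A" and neg: "w (fund_weight a) j < 0"
  shows "weyl_length A (sref A j \<circ> w) < weyl_length A w"
proof -
  obtain xs where xs: "word_elt A xs = w" "length xs = weyl_length A w" using wl_ex[OF w] by blast
  obtain zs where zs: "length zs < length xs" "word_elt A zs = sref A j \<circ> word_elt A xs"
    using deletion[OF cs, of xs a j] neg xs(1) by blast
  have "weyl_length A (sref A j \<circ> w) \<le> length zs" using zs(2) xs(1) wl_le by metis
  then show ?thesis using zs(1) xs(2) by simp
qed

lemma sref_weyl: "w \<in> weyl A \<Longrightarrow> sref A j \<circ> w \<in> weyl A"
proof -
  assume "w \<in> weyl A"
  then obtain ys where "w = word_elt A ys" unfolding weyl_def by blast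
  then have "sref A j \<circ> w = word_elt A (j # ys)" by simp
  then show ?thesis unfolding weyl_def by (rule range_eqI)
qed

lemma sref_twice: "A j j = 2 \<Longrightarrow> sref A j \<circ> (sref A j \<circ> w) = w"
  by (rule ext) (simp add: sref_sref)

lemma E':
  fixes A :: "'i::finite \<Rightarrow> 'i \<Rightarrow> int"
  assumes cs: "cartan_simple A" and w: "w \<in> weyl A" and p: "w (fund_weight a) j > 0"
  shows "weyl_length A w < weyl_length A (sref A j \<circ> w)"
proof -
  have neg: "(sref A j \<circ> w) (fund_weight a) j < 0" using p cs_diag[OF cs, of j] by (simp add: sref_def)
  have h: "sref A j \<circ> (sref A j \<circ> w) = w" by (rule sref_twice[of A j, OF cs_diag[OF cs, of j]])
  from E[OF cs sref_weyl[OF w] neg] show ?thesis unfolding h .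
qed

lemma bruhat_chain:
  assumes "(\<lambda>x y. \<exists>t\<in>weyl_reflections A. y = t \<circ> x \<and> weyl_length A x < weyl_length A y)\<^sup>*\<^sup>* u w"
  shows "u = w \<or> weyl_length A u < weyl_length A w"
  using assms by (induction rule: rtranclp_induct) auto

lemma weyl_minus_iff:
  fixes A :: "'i::finite \<Rightarrow> 'i \<Rightarrow> int"
  assumes cs: "cartan_simple A" and w: "w \<in> weyl A"
  shows "w \<in> weyl_minus A j \<longleftrightarrow> weyl_length A (sref A j \<circ> w) < weyl_length A w"
proof
  assume "w \<in> weyl_minus A j"
  then have "bruhat_less A (sref A j \<circ> w) w" unfolding weyl_minus_def by blast
  then show "weyl_length A (sref A j \<circ> w) < weyl_length A w"
    unfolding bruhat_less_def bruhat_le_def using bruhat_chain by blast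
next
  assume l: "weyl_length A (sref A j \<circ> w) < weyl_length A w"
  have refl: "sref A j \<in> weyl_reflections A"
  proof -
    have "sref A j = word_elt A [] \<circ> sref A j \<circ> word_elt A (rev [])" by simp
    then show ?thesis unfolding weyl_reflections_def by blast
  qed
  have "w = sref A j \<circ> (sref A j \<circ> w)" by (rule sym, rule sref_twice[of A j, OF cs_diag[OF cs, of j]])
  then have "(\<lambda>x y. \<exists>t\<in>weyl_reflections A. y = t \<circ> x \<and> weyl_length A x < weyl_length A y) (sref A j \<circ> w) w"
    using refl l by blast
  then have "bruhat_le A (sref A j \<circ> w) w" unfolding bruhat_le_def using sref_weyl[OF w] by auto
  moreover have "sref A j \<circ> w \<noteq> w" using l by auto
  ultimately show "w \<in> weyl_minus A j" unfolding weyl_minus_def bruhat_less_def using w by blast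
qed

theorem lemma3p8:
  fixes A :: "'i::finite \<Rightarrow> 'i \<Rightarrow> int" and j :: 'i and \<gamma> :: "'i \<Rightarrow> int"
  assumes "cartan_simple A"
    and "\<gamma> \<in> chamber_weights A"
  shows "(\<gamma> \<in> Gamma_up A j \<longleftrightarrow> \<gamma> j \<le> 0) \<and> (\<gamma> \<in> Gamma_low A j \<longleftrightarrow> \<gamma> j > 0)"
proof -
  note cs = assms(1)
  obtain w i where w: "w \<in> weyl A" "\<gamma> = w (fund_weight i)"
    using assms(2) unfolding chamber_weights_def by blast
  have up: "\<gamma> \<in> Gamma_up A j \<longleftrightarrow> \<gamma> j \<le> 0"
  proof
    assume "\<gamma> \<in> Gamma_up A j"
    then obtain w' k where w': "w' \<in> weyl_minus A j" "\<gamma> = w' (fund_weight k)"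
      unfolding Gamma_up_def by blast
    have w'W: "w' \<in> weyl A" using w'(1) unfolding weyl_minus_def by blast
    have l: "weyl_length A (sref A j \<circ> w') < weyl_length A w'" using w'(1) weyl_minus_iff[OF cs w'W] by blast
    show "\<gamma> j \<le> 0"
    proof (rule ccontr)
      assume "\<not> \<gamma> j \<le> 0"
      then have "w' (fund_weight k) j > 0" using w'(2) by simp
      from E'[OF cs w'W this] show False using l by simp
    qed
  next
    assume g0: "\<gamma> j \<le> 0"
    obtain ys where ys: "word_elt A ys = w" using w(1) unfolding weyl_def by blast
    have "\<exists>w'. w' \<in> weyl_minus A j \<and> w' (fund_weight i) = \<gamma>"
    proof (cases "\<exists>a. w (fund_weight a) j < 0")
      case True
      then obtain a where "w (fund_weight a) j < 0" by blast
      from E[OF cs w(1) this] have "w \<in> weyl_minus A j" using weyl_minus_iff[OF cs w(1)] by blast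
      then show ?thesis using w(2) by blast
    next
      case False
      obtain a where a: "w (fund_weight a) j \<noteq> 0" using nonzero[OF cs, of ys j] ys by blast
      then have apos: "w (fund_weight a) j > 0" using False by (meson linorder_neqE_linordered_idom)
      define w' where "w' = sref A j \<circ> w"
      have w'W: "w' \<in> weyl A" unfolding w'_def by (rule sref_weyl[OF w(1)])
      have "w' (fund_weight a) j < 0" using apos cs_diag[OF cs, of j] unfolding w'_def by (simp add: sref_def)
      from E[OF cs w'W this] have "w' \<in> weyl_minus A j" using weyl_minus_iff[OF cs w'W] by blast
      moreover have "\<gamma> j = 0"
      proof -
        have "\<gamma> j \<ge> 0" using False w(2) by (simp add: not_less)
        then show ?thesis using g0 by simp
      qed
      then have "w' (fund_weight i) = \<gamma>" unfolding w'_def using w(2) by (auto simp: sref_def)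
      ultimately show ?thesis by blast
    qed
    then show "\<gamma> \<in> Gamma_up A j" unfolding Gamma_up_def by blast
  qed
  have low: "\<gamma> \<in> Gamma_low A j \<longleftrightarrow> \<gamma> j > 0"
    using up assms(2) unfolding Gamma_low_def by auto
  show ?thesis using up low by blast
qed


end
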